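(* Let $\mathcal{S}$ be a temporal feedback graph on $T$ rounds with maximal orders $C_1,\dots,C_N$, and let $\boldsymbol\mu^*$ be any optimal solution to the upper bound dual program. Let $\mathcal{C}(\boldsymbol\mu^* )\subseteq[N]$ be the set of $c$ with $\sum_{t\in C_c}(\mu^*_t)^2=1$. Then there exists a subset $\mathcal{B}\subseteq\mathcal{C}(\boldsymbol\mu^* )$ with $|\mathcal{B}|\le T$ and an optimal solution $\boldsymbol\lambda^*$ of the upper bound program such that $\lambda^*_{c,t}=0$ for all $t$ whenever $c\notin\mathcal{B}$.
   Context: A temporal feedback graph $\mathcal{S}$ is a collection of subsets $S_t\subseteq[T]\setminus\{t\}$. An order is a sequence $t_1,\dots,t_w$ with $t_u\in S_{t_v}$ for all $u<v$; maximal if no super-sequence is an order. Upper bound program: minimize $\sum_{c=1}^N\sqrt{\sum_{t\in C_c}\lambda_{c,t}^2}$ subject to $\sum_{c}\lambda_{c,t}=1$ for all $t\in[T]$, $\lambda_{c,t}=0$ if $t\notin C_c$, $\lambda_{c,t}\ge0$. Upper bound dual program: maximize $\sum_{t=1}^T\mu_t$ subject to $\sum_{t\in C_c}\mu_t^2\le1$ for all $c\in[N]$, $\mu_t\ge0$. *)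

theory Defs
  imports Complex_Main "HOL-Library.Sublist"
begin

definition tfg :: "(nat \<Rightarrow> nat set) \<Rightarrow> nat \<Rightarrow> bool" where
  "tfg S T \<longleftrightarrow> (\<forall>t\<in>{1..T}. S t \<subseteq> {1..T} - {t})"

definition is_order :: "(nat \<Rightarrow> nat set) \<Rightarrow> nat \<Rightarrow> nat list \<Rightarrow> bool" where
  "is_order S T xs \<longleftrightarrow> set xs \<subseteq> {1..T} \<and>
     (\<forall>u v. u < v \<and> v < length xs \<longrightarrow> xs ! u \<in> S (xs ! v))"

definition maximal_order :: "(nat \<Rightarrow> nat set) \<Rightarrow> nat \<Rightarrow> nat list \<Rightarrow> bool" where
  "maximal_order S T xs \<longleftrightarrow> is_order S T xs \<and>
     \<not> (\<exists>ys. is_order S T ys \<and> subseq xs ys \<and> ys \<noteq> xs)"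

text \<open>The maximal orders C_1, ..., C_N serve directly as the index set.\<close>
definition max_orders :: "(nat \<Rightarrow> nat set) \<Rightarrow> nat \<Rightarrow> nat list set" where
  "max_orders S T = {xs. maximal_order S T xs}"

definition ub_feasible :: "(nat \<Rightarrow> nat set) \<Rightarrow> nat \<Rightarrow> (nat list \<Rightarrow> nat \<Rightarrow> real) \<Rightarrow> bool" where
  "ub_feasible S T lam \<longleftrightarrow>
     (\<forall>t\<in>{1..T}. (\<Sum>c\<in>max_orders S T. lam c t) = 1) \<and>
     (\<forall>c\<in>max_orders S T. \<forall>t. t \<notin> set c \<longrightarrow> lam c t = 0) \<and>
     (\<forall>c\<in>max_orders S T. \<forall>t. lam c t \<ge> 0)"

definition ub_obj :: "(nat \<Rightarrow> nat set) \<Rightarrow> nat \<Rightarrow> (nat list \<Rightarrow> nat \<Rightarrow> real) \<Rightarrow> real" where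
  "ub_obj S T lam = (\<Sum>c\<in>max_orders S T. sqrt (\<Sum>t\<in>set c. (lam c t)\<^sup>2))"

definition ub_optimal :: "(nat \<Rightarrow> nat set) \<Rightarrow> nat \<Rightarrow> (nat list \<Rightarrow> nat \<Rightarrow> real) \<Rightarrow> bool" where
  "ub_optimal S T lam \<longleftrightarrow> ub_feasible S T lam \<and>
     (\<forall>lam'. ub_feasible S T lam' \<longrightarrow> ub_obj S T lam \<le> ub_obj S T lam')"

definition dual_feasible :: "(nat \<Rightarrow> nat set) \<Rightarrow> nat \<Rightarrow> (nat \<Rightarrow> real) \<Rightarrow> bool" where
  "dual_feasible S T mu \<longleftrightarrow>
     (\<forall>c\<in>max_orders S T. (\<Sum>t\<in>set c. (mu t)\<^sup>2) \<le> 1) \<and>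
     (\<forall>t\<in>{1..T}. mu t \<ge> 0)"

definition dual_obj :: "nat \<Rightarrow> (nat \<Rightarrow> real) \<Rightarrow> real" where
  "dual_obj T mu = (\<Sum>t\<in>{1..T}. mu t)"

definition dual_optimal :: "(nat \<Rightarrow> nat set) \<Rightarrow> nat \<Rightarrow> (nat \<Rightarrow> real) \<Rightarrow> bool" where
  "dual_optimal S T mu \<longleftrightarrow> dual_feasible S T mu \<and>
     (\<forall>mu'. dual_feasible S T mu' \<longrightarrow> dual_obj T mu' \<le> dual_obj T mu)"

definition tight :: "(nat \<Rightarrow> nat set) \<Rightarrow> nat \<Rightarrow> (nat \<Rightarrow> real) \<Rightarrow> nat list set" where
  "tight S T mu = {c\<in>max_orders S T. (\<Sum>t\<in>set c. (mu t)\<^sup>2) = 1}"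

end

theory Submission
  imports Defs "HOL-Analysis.L2_Norm"
begin


definition ip :: "nat set \<Rightarrow> (nat \<Rightarrow> real) \<Rightarrow> (nat \<Rightarrow> real) \<Rightarrow> real" where
  "ip I x y = (\<Sum>t\<in>I. x t * y t)"

lemma ip_right: "ip I x (\<lambda>t. f t - c * g t) = ip I x f - c * ip I x g"
  by (simp add: ip_def sum_subtractf sum_distrib_left algebra_simps)

lemma ip_left: "ip I (\<lambda>t. f t - c * g t) u = ip I f u - c * ip I g u"
  by (simp add: ip_def sum_subtractf sum_distrib_left algebra_simps)

lemma farkas:
  assumes "finite K" and fI: "finite I"
  shows "(\<exists>a. (\<forall>k\<in>K. a k \<ge> 0) \<and> (\<forall>t\<in>I. b t = (\<Sum>k\<in>K. a k * v k t)))
       \<or> (\<exists>y. (\<forall>k\<in>K. ip I y (v k) \<le> 0) \<and> ip I y b > 0)"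
  using assms(1)
proof (induction K arbitrary: v b rule: finite_induct)
  case empty
  show ?case
  proof (cases "\<forall>t\<in>I. b t = 0")
    case True then show ?thesis by auto
  next
    case False
    then obtain t0 where t0: "t0 \<in> I" "b t0 \<noteq> 0" by auto
    have "ip I b b > 0"
    proof -
      have "b t0 * b t0 \<le> ip I b b" unfolding ip_def
        using fI t0 by (intro member_le_sum) auto
      moreover have "b t0 * b t0 > 0" using t0 by (auto simp add: zero_less_mult_iff linorder_neq_iff)
      ultimately show ?thesis by linarith
    qed
    then show ?thesis by auto
  qed
next
  case (insert k0 K)
  let ?w = "v k0"
  from insert.IH[of b v] show ?case
  proof
    assume "\<exists>a. (\<forall>k\<in>K. a k \<ge> 0) \<and> (\<forall>t\<in>I. b t = (\<Sum>k\<in>K. a k * v k t))"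
    then obtain a where a: "\<forall>k\<in>K. a k \<ge> 0" "\<forall>t\<in>I. b t = (\<Sum>k\<in>K. a k * v k t)" by blast
    have s: "(\<Sum>k\<in>K. (a(k0:=0)) k * v k t) = (\<Sum>k\<in>K. a k * v k t)" for t
      using insert.hyps by (intro sum.cong) auto
    show ?thesis
      apply (rule disjI1, rule exI[of _ "a(k0:=0)"])
      using a insert.hyps s by auto
  next
    assume "\<exists>y. (\<forall>k\<in>K. ip I y (v k) \<le> 0) \<and> ip I y b > 0"
    then obtain y where y: "\<forall>k\<in>K. ip I y (v k) \<le> 0" "ip I y b > 0" by blast
    show ?thesis
    proof (cases "ip I y ?w \<le> 0")
      case True then show ?thesis using y by auto
    next
      case False
      define \<alpha> where "\<alpha> = ip I y ?w"
      have apos: "\<alpha> > 0" using False \<alpha>_def by simp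
      define v' where "v' k = (\<lambda>t. v k t - (ip I y (v k) / \<alpha>) * ?w t)" for k
      define b' where "b' = (\<lambda>t. b t - (ip I y b / \<alpha>) * ?w t)"
      from insert.IH[of b' v'] show ?thesis
      proof
        assume "\<exists>a. (\<forall>k\<in>K. a k \<ge> 0) \<and> (\<forall>t\<in>I. b' t = (\<Sum>k\<in>K. a k * v' k t))"
        then obtain a where a: "\<forall>k\<in>K. a k \<ge> 0" "\<forall>t\<in>I. b' t = (\<Sum>k\<in>K. a k * v' k t)" by blast
        define \<beta> where "\<beta> = (ip I y b - (\<Sum>k\<in>K. a k * ip I y (v k))) / \<alpha>"
        have "(\<Sum>k\<in>K. a k * ip I y (v k)) \<le> 0"
          using a(1) y(1) by (intro sum_nonpos) (simp add: mult_nonneg_nonpos)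
        then have bpos: "\<beta> \<ge> 0" unfolding \<beta>_def using apos y(2) by simp
        have s: "(\<Sum>k\<in>K. (a(k0:=\<beta>)) k * v k t) = (\<Sum>k\<in>K. a k * v k t)" for t
          using insert.hyps by (intro sum.cong) auto
        have eq: "b t = (\<Sum>k\<in>insert k0 K. (a(k0:=\<beta>)) k * v k t)" if "t \<in> I" for t
        proof -
          have "(\<Sum>k\<in>K. a k * v' k t) = (\<Sum>k\<in>K. a k * v k t) - (\<Sum>k\<in>K. a k * ip I y (v k)) / \<alpha> * ?w t"
            unfolding v'_def by (simp add: sum_subtractf sum_distrib_left sum_distrib_right sum_divide_distrib algebra_simps)
          then have "b' t = (\<Sum>k\<in>K. a k * v k t) - (\<Sum>k\<in>K. a k * ip I y (v k)) / \<alpha> * ?w t"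
            using a(2) that by simp
          then have "b t = (\<Sum>k\<in>K. a k * v k t) + \<beta> * ?w t"
            unfolding b'_def \<beta>_def by (simp add: diff_divide_distrib algebra_simps)
          then show ?thesis using insert.hyps s by simp
        qed
        show ?thesis
          apply (rule disjI1, rule exI[of _ "a(k0:=\<beta>)"])
          using a(1) bpos eq by auto
      next
        assume "\<exists>z. (\<forall>k\<in>K. ip I z (v' k) \<le> 0) \<and> ip I z b' > 0"
        then obtain z where z: "\<forall>k\<in>K. ip I z (v' k) \<le> 0" "ip I z b' > 0" by blast
        define z' where "z' = (\<lambda>t. z t - (ip I z ?w / \<alpha>) * y t)"
        have key: "ip I z' u = ip I z (\<lambda>t. u t - (ip I y u / \<alpha>) * ?w t)" for u
          unfolding z'_def ip_left ip_right
          by (simp add: ip_def sum_distrib_left mult.commute mult.left_commute)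
        have "ip I z' ?w = 0" unfolding z'_def ip_left using apos \<alpha>_def by simp
        moreover have "\<forall>k\<in>K. ip I z' (v k) \<le> 0" using z(1) key unfolding v'_def by simp
        moreover have "ip I z' b > 0" using z(2) key unfolding b'_def by simp
        ultimately show ?thesis by (intro disjI2 exI[of _ z']) auto
      qed
    qed
  qed
qed

lemma dependent:
  fixes v :: "'a \<Rightarrow> nat \<Rightarrow> real" and I :: "nat set"
  assumes "finite I" "card K > card I"
  shows "\<exists>c. (\<exists>k\<in>K. c k \<noteq> 0) \<and> (\<forall>t\<in>I. (\<Sum>k\<in>K. c k * v k t) = (0::real))"
  using assms
proof (induction I arbitrary: K v rule: finite_induct)
  case empty
  then have "K \<noteq> {}" by auto
  then show ?case by (intro exI[of _ "\<lambda>_. 1"]) auto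
next
  case (insert i J)
  have fK: "finite K" using insert.prems card.infinite by fastforce
  show ?case
  proof (cases "\<forall>k\<in>K. v k i = 0")
    case True
    have "card K > card J" using insert by simp
    from insert.IH[OF this, of v] obtain c where c: "\<exists>k\<in>K. c k \<noteq> 0" "\<forall>t\<in>J. (\<Sum>k\<in>K. c k * v k t) = 0" by blast
    show ?thesis using c True by (intro exI[of _ c]) auto
  next
    case False
    then obtain k0 where k0: "k0 \<in> K" "v k0 i \<noteq> 0" by auto
    define K' where "K' = K - {k0}"
    define v' where "v' k = (\<lambda>t. v k t - (v k i / v k0 i) * v k0 t)" for k
    have "card K' > card J" using insert k0 fK unfolding K'_def by simp
    from insert.IH[OF this, of v'] obtain c where
      c: "\<exists>k\<in>K'. c k \<noteq> 0" "\<forall>t\<in>J. (\<Sum>k\<in>K'. c k * v' k t) = 0" by blast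
    define c' where "c' = c(k0 := - (\<Sum>k\<in>K'. c k * v k i) / v k0 i)"
    have Keq: "K = insert k0 K'" using k0 unfolding K'_def by auto
    have fK': "finite K'" using fK K'_def by simp
    have k0K': "k0 \<notin> K'" unfolding K'_def by simp
    have main: "(\<Sum>k\<in>K. c' k * v k t) = (\<Sum>k\<in>K'. c k * v' k t)" for t
    proof -
      have s: "(\<Sum>k\<in>K'. c' k * v k t) = (\<Sum>k\<in>K'. c k * v k t)"
        using k0K' unfolding c'_def by (intro sum.cong) auto
      have "(\<Sum>k\<in>K'. c k * v' k t) = (\<Sum>k\<in>K'. c k * v k t) - (\<Sum>k\<in>K'. c k * v k i) / v k0 i * v k0 t"
        unfolding v'_def by (simp add: sum_subtractf sum_distrib_left sum_distrib_right sum_divide_distrib algebra_simps)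
      moreover have "(\<Sum>k\<in>K. c' k * v k t) = c' k0 * v k0 t + (\<Sum>k\<in>K'. c k * v k t)"
        using Keq fK' k0K' s by simp
      ultimately show ?thesis unfolding c'_def by (simp add: algebra_simps)
    qed
    have "\<forall>t\<in>insert i J. (\<Sum>k\<in>K. c' k * v k t) = 0"
    proof
      fix t assume "t \<in> insert i J"
      then show "(\<Sum>k\<in>K. c' k * v k t) = 0"
      proof
        assume "t = i"
        then show ?thesis unfolding main v'_def using k0 by simp
      next
        assume "t \<in> J" then show ?thesis using main c(2) by simp
      qed
    qed
    moreover have "\<exists>k\<in>K. c' k \<noteq> 0"
    proof -
      from c(1) obtain k where "k \<in> K'" "c k \<noteq> 0" by blast
      moreover then have "k \<noteq> k0" using k0K' by blast
      ultimately show ?thesis unfolding c'_def K'_def by auto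
    qed
    ultimately show ?thesis by blast
  qed
qed

lemma caratheodory:
  fixes v :: "'a \<Rightarrow> nat \<Rightarrow> real" and I :: "nat set" and a :: "'a \<Rightarrow> real"
  assumes "finite I" "finite K" "\<forall>k\<in>K. a k \<ge> 0" "\<forall>t\<in>I. b t = (\<Sum>k\<in>K. a k * v k t)"
  shows "\<exists>B\<subseteq>K. card B \<le> card I \<and> (\<exists>a'. (\<forall>k\<in>B. a' k \<ge> 0) \<and> (\<forall>t\<in>I. b t = (\<Sum>k\<in>B. a' k * v k t)))"
  using assms(2-)
proof (induction "card K" arbitrary: K a rule: less_induct)
  case less
  show ?case
  proof (cases "card K \<le> card I")
    case True then show ?thesis using less.prems by blast
  next
    case False
    then have "card K > card I" by simp
    from dependent[OF assms(1) this, of v] obtain c0 where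
      c0: "\<exists>k\<in>K. c0 k \<noteq> 0" "\<forall>t\<in>I. (\<Sum>k\<in>K. c0 k * v k t) = 0" by blast
    obtain c where c: "\<exists>k\<in>K. c k > 0" "\<forall>t\<in>I. (\<Sum>k\<in>K. c k * v k t) = 0"
    proof (cases "\<exists>k\<in>K. c0 k > 0")
      case True then show ?thesis using that c0 by blast
    next
      case False
      then obtain k where "k \<in> K" "c0 k < 0" using c0(1) by force
      moreover have "\<forall>t\<in>I. (\<Sum>k\<in>K. (- c0 k) * v k t) = 0"
        using c0(2) by (simp add: sum_negf)
      ultimately show ?thesis using that[of "\<lambda>k. - c0 k"] by force
    qed
    define P where "P = {k\<in>K. c k > 0}"
    have fP: "finite P" "P \<noteq> {}" using less.prems(1) c(1) unfolding P_def by auto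
    define \<theta> where "\<theta> = Min ((\<lambda>k. a k / c k) ` P)"
    have "\<theta> \<in> (\<lambda>k. a k / c k) ` P"
      unfolding \<theta>_def using fP by (intro Min_in) auto
    then obtain ks where ks: "ks \<in> P" "\<theta> = a ks / c ks" by blast
    have thle: "\<theta> \<le> a k / c k" if "k \<in> P" for k
      unfolding \<theta>_def using fP that by (intro Min_le) auto
    have th0: "\<theta> \<ge> 0" using ks less.prems(2) unfolding P_def by auto
    define a' where "a' k = a k - \<theta> * c k" for k
    have a'nn: "a' k \<ge> 0" if "k \<in> K" for k
    proof (cases "c k > 0")
      case True
      then have "\<theta> \<le> a k / c k" using thle that P_def by auto
      then have "\<theta> * c k \<le> a k" using True by (simp add: pos_le_divide_eq)
      then show ?thesis unfolding a'_def by simp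
    next
      case False
      then have "\<theta> * c k \<le> 0" using th0 by (simp add: mult_nonneg_nonpos)
      moreover have "a k \<ge> 0" using less.prems(2) that by blast
      ultimately show ?thesis unfolding a'_def by linarith
    qed
    have a'ks: "a' ks = 0" using ks unfolding a'_def P_def by auto
    have ksK: "ks \<in> K" using ks P_def by auto
    define K' where "K' = K - {ks}"
    have eq: "b t = (\<Sum>k\<in>K'. a' k * v k t)" if "t \<in> I" for t
    proof -
      have "(\<Sum>k\<in>K. a' k * v k t) = (\<Sum>k\<in>K. a k * v k t) - \<theta> * (\<Sum>k\<in>K. c k * v k t)"
        unfolding a'_def by (simp add: sum_subtractf sum_distrib_left algebra_simps)
      also have "\<dots> = b t" using that c(2) less.prems(3) by simp
      finally have "b t = (\<Sum>k\<in>K. a' k * v k t)" by simp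
      also have "\<dots> = a' ks * v ks t + (\<Sum>k\<in>K'. a' k * v k t)"
        unfolding K'_def using ksK less.prems(1) by (simp add: sum.remove)
      finally show ?thesis using a'ks by simp
    qed
    have cK: "card K' < card K" unfolding K'_def using ksK less.prems(1) by (metis card_Diff1_less)
    have f1: "finite K'" using less.prems(1) K'_def by simp
    have f2: "\<forall>k\<in>K'. a' k \<ge> 0" using a'nn K'_def by simp
    have f3: "\<forall>t\<in>I. b t = (\<Sum>k\<in>K'. a' k * v k t)" using eq by blast
    obtain B where "B \<subseteq> K'" "card B \<le> card I"
      "\<exists>a'. (\<forall>k\<in>B. a' k \<ge> 0) \<and> (\<forall>t\<in>I. b t = (\<Sum>k\<in>B. a' k * v k t))"
      using less.hyps[OF cK f1 f2 f3] by blast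
    then show ?thesis unfolding K'_def by blast
  qed
qed



lemma order_distinct:
  assumes "tfg S T" "is_order S T xs" shows "distinct xs"
proof -
  have "xs ! i \<noteq> xs ! j" if "i < j" "j < length xs" for i j
  proof -
    have "xs ! j \<in> {1..T}" using assms(2) that unfolding is_order_def
      by (meson nth_mem subsetD)
    moreover have "xs ! i \<in> S (xs ! j)" using assms(2) that unfolding is_order_def by blast
    ultimately show ?thesis using assms(1) unfolding tfg_def by blast
  qed
  then show ?thesis unfolding distinct_conv_nth by (metis linorder_neqE_nat)
qed

lemma max_orders_set: "c \<in> max_orders S T \<Longrightarrow> set c \<subseteq> {1..T}"
  unfolding max_orders_def maximal_order_def is_order_def by auto

lemma finite_max_orders:
  assumes "tfg S T" shows "finite (max_orders S T)"
proof -
  have "max_orders S T \<subseteq> {xs. set xs \<subseteq> {1..T} \<and> length xs \<le> T}"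
  proof
    fix xs assume a: "xs \<in> max_orders S T"
    then have o: "is_order S T xs" unfolding max_orders_def maximal_order_def by auto
    have d: "distinct xs" using order_distinct[OF assms o] .
    have s: "set xs \<subseteq> {1..T}" using max_orders_set[OF a] .
    have "length xs = card (set xs)" using d by (simp add: distinct_card)
    also have "\<dots> \<le> card {1..T}" using s by (intro card_mono) auto
    finally show "xs \<in> {xs. set xs \<subseteq> {1..T} \<and> length xs \<le> T}" using s by simp
  qed
  moreover have "finite {xs. set xs \<subseteq> {1..T} \<and> length xs \<le> T}"
    by (rule finite_lists_length_le) simp
  ultimately show ?thesis by (rule finite_subset)
qed

lemma weak_duality:
  assumes "tfg S T" "dual_feasible S T mu" "ub_feasible S T lam"
  shows "dual_obj T mu \<le> ub_obj S T lam"
proof -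
  let ?M = "max_orders S T"
  have fM: "finite ?M" using finite_max_orders[OF assms(1)] .
  have "dual_obj T mu = (\<Sum>t\<in>{1..T}. mu t * (\<Sum>c\<in>?M. lam c t))"
    unfolding dual_obj_def using assms(3) unfolding ub_feasible_def by simp
  also have "\<dots> = (\<Sum>c\<in>?M. \<Sum>t\<in>{1..T}. mu t * lam c t)"
    unfolding sum_distrib_left by (rule sum.swap)
  also have "\<dots> = (\<Sum>c\<in>?M. \<Sum>t\<in>set c. mu t * lam c t)"
  proof (rule sum.cong[OF refl])
    fix c assume c: "c \<in> ?M"
    show "(\<Sum>t\<in>{1..T}. mu t * lam c t) = (\<Sum>t\<in>set c. mu t * lam c t)"
      using c max_orders_set[OF c] assms(3) unfolding ub_feasible_def
      by (intro sum.mono_neutral_right) auto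
  qed
  also have "\<dots> \<le> (\<Sum>c\<in>?M. sqrt (\<Sum>t\<in>set c. (lam c t)\<^sup>2))"
  proof (rule sum_mono)
    fix c assume c: "c \<in> ?M"
    have "(\<Sum>t\<in>set c. mu t * lam c t) \<le> (\<Sum>t\<in>set c. \<bar>mu t\<bar> * \<bar>lam c t\<bar>)"
      by (intro sum_mono) (metis abs_ge_self abs_mult)
    also have "\<dots> \<le> L2_set mu (set c) * L2_set (lam c) (set c)" by (rule L2_set_mult_ineq)
    also have "\<dots> \<le> 1 * L2_set (lam c) (set c)"
    proof (rule mult_right_mono)
      have "(\<Sum>t\<in>set c. (mu t)\<^sup>2) \<le> 1" using c assms(2) unfolding dual_feasible_def by blast
      then show "L2_set mu (set c) \<le> 1" unfolding L2_set_def by simp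
    qed (simp add: L2_set_def sum_nonneg)
    finally show "(\<Sum>t\<in>set c. mu t * lam c t) \<le> sqrt (\<Sum>t\<in>set c. (lam c t)\<^sup>2)"
      by (simp add: L2_set_def)
  qed
  finally show ?thesis unfolding ub_obj_def .
qed

lemma cone:
  assumes tfg: "tfg S T" and opt: "dual_optimal S T mu"
  shows "\<exists>a. (\<forall>c\<in>tight S T mu. a c \<ge> 0) \<and>
     (\<forall>t\<in>{1..T}. (1::real) = (\<Sum>c\<in>tight S T mu. a c * (\<lambda>c t. if t \<in> set c then mu t else 0) c t))"
proof -
  let ?M = "max_orders S T"
  let ?K = "tight S T mu"
  let ?I = "{1..T::nat}"
  define v where "v = (\<lambda>c t. if t \<in> set c then mu t else (0::real))"
  have fM: "finite ?M" using finite_max_orders[OF tfg] .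
  have KM: "?K \<subseteq> ?M" unfolding tight_def by auto
  have fK: "finite ?K" using fM KM finite_subset by blast
  have feas: "dual_feasible S T mu" using opt unfolding dual_optimal_def by blast
  have mu0: "\<forall>t\<in>?I. mu t \<ge> 0" using feas unfolding dual_feasible_def by blast
  have s1: "\<forall>c\<in>?M. (\<Sum>t\<in>set c. (mu t)\<^sup>2) \<le> 1" using feas unfolding dual_feasible_def by blast
  from farkas[OF fK finite_atLeastAtMost[of 1 T], where b = "\<lambda>_. 1" and v = v] show ?thesis
  proof
    assume "\<exists>a. (\<forall>k\<in>?K. a k \<ge> 0) \<and> (\<forall>t\<in>?I. 1 = (\<Sum>k\<in>?K. a k * v k t))"
    then show ?thesis unfolding v_def by blast
  next
    assume "\<exists>y. (\<forall>k\<in>?K. ip ?I y (v k) \<le> 0) \<and> ip ?I y (\<lambda>_. 1) > 0"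
    then obtain y where y1: "\<forall>k\<in>?K. ip ?I y (v k) \<le> 0" and y2: "ip ?I y (\<lambda>_. 1) > 0" by blast
    have ipv: "ip ?I y (v c) = (\<Sum>t\<in>set c. y t * mu t)" if "c \<in> ?M" for c
    proof -
      have "ip ?I y (v c) = (\<Sum>t\<in>set c. y t * v c t)"
        unfolding ip_def using max_orders_set[OF that] by (intro sum.mono_neutral_right) (auto simp: v_def)
      then show ?thesis by (simp add: v_def)
    qed
    define Y where "Y = (\<Sum>t\<in>?I. y t)"
    have Ypos: "Y > 0" using y2 unfolding Y_def ip_def by simp
    define Mu where "Mu = (\<Sum>t\<in>?I. mu t)"
    have Mu0: "Mu \<ge> 0" unfolding Mu_def using mu0 by (intro sum_nonneg) auto
    define \<delta> where "\<delta> = Y / (2 * (Mu + 1))"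
    have dpos: "\<delta> > 0" unfolding \<delta>_def using Ypos Mu0 by simp
    have dMu: "\<delta> * Mu = Y / 2 - \<delta>" unfolding \<delta>_def using Mu0 by (simp add: field_simps)
    define d where "d t = y t - \<delta> * mu t" for t
    have sd: "(\<Sum>t\<in>?I. d t) > 0"
    proof -
      have "(\<Sum>t\<in>?I. d t) = Y - \<delta> * Mu" unfolding d_def Y_def Mu_def
        by (simp add: sum_subtractf sum_distrib_left)
      then show ?thesis using dMu dpos Ypos by simp
    qed
    define sc where "sc c = (\<Sum>t\<in>set c. (mu t)\<^sup>2)" for c
    define mc where "mc c = (\<Sum>t\<in>set c. mu t * d t)" for c
    define Dc where "Dc c = (\<Sum>t\<in>set c. (d t)\<^sup>2)" for c
    have expand: "(\<Sum>t\<in>set c. (mu t + e * d t)\<^sup>2) = sc c + e * (2 * mc c + e * Dc c)" for c e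
      unfolding sc_def mc_def Dc_def
      by (simp add: power2_eq_square sum.distrib sum_distrib_left algebra_simps)
    have ev: "\<forall>c\<in>?M. eventually (\<lambda>e. sc c + e * (2 * mc c + e * Dc c) \<le> 1) (at_right 0)"
    proof
      fix c assume cM: "c \<in> ?M"
      show "eventually (\<lambda>e. sc c + e * (2 * mc c + e * Dc c) \<le> 1) (at_right 0)"
      proof (cases "c \<in> ?K")
        case True
        then have sc1: "sc c = 1" unfolding tight_def sc_def by simp
        have "mc c = (\<Sum>t\<in>set c. y t * mu t) - \<delta> * sc c"
          unfolding mc_def sc_def d_def
          by (simp add: sum_subtractf sum_distrib_left power2_eq_square algebra_simps)
        moreover have "(\<Sum>t\<in>set c. y t * mu t) \<le> 0" using y1 True ipv[OF cM] by metis
        ultimately have mneg: "2 * mc c < 0" using sc1 dpos by simp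
        have "((\<lambda>e. 2 * mc c + e * Dc c) \<longlongrightarrow> 2 * mc c + 0 * Dc c) (at_right 0)"
          by (intro tendsto_intros)
        then have "((\<lambda>e. 2 * mc c + e * Dc c) \<longlongrightarrow> 2 * mc c) (at_right 0)" by simp
        from order_tendstoD(2)[OF this mneg]
        have "eventually (\<lambda>e. 2 * mc c + e * Dc c < 0) (at_right 0)" .
        then show ?thesis using eventually_at_right_less[of "0::real"]
        proof eventually_elim
          case (elim e)
          then have "e * (2 * mc c + e * Dc c) < 0" by (simp add: mult_pos_neg)
          then show ?case using sc1 by simp
        qed
      next
        case False
        then have "sc c < 1" using s1 cM unfolding tight_def sc_def by force
        moreover have "((\<lambda>e. sc c + e * (2 * mc c + e * Dc c)) \<longlongrightarrow> sc c + 0 * (2 * mc c + 0 * Dc c)) (at_right 0)"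
          by (intro tendsto_intros)
        ultimately have "eventually (\<lambda>e. sc c + e * (2 * mc c + e * Dc c) < 1) (at_right 0)"
          using order_tendstoD(2) by fastforce
        then show ?thesis by (rule eventually_mono) simp
      qed
    qed
    have "eventually (\<lambda>e. (\<forall>c\<in>?M. sc c + e * (2 * mc c + e * Dc c) \<le> 1) \<and> 0 < e) (at_right (0::real))"
      using eventually_ball_finite[OF fM ev] eventually_at_right_less[of "0::real"]
      by (rule eventually_conj)
    then obtain b where b: "b > 0" "\<forall>e>0. e < b \<longrightarrow> (\<forall>c\<in>?M. sc c + e * (2 * mc c + e * Dc c) \<le> 1) \<and> 0 < e"
      unfolding eventually_at_right_field by auto
    define e where "e = b / 2"
    have e0: "e > 0" "e < b" using b unfolding e_def by auto
    have e: "e > 0" "\<forall>c\<in>?M. sc c + e * (2 * mc c + e * Dc c) \<le> 1"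
      using b(2) e0 by blast+
    define mu2 where "mu2 t = \<bar>mu t + e * d t\<bar>" for t
    have "dual_feasible S T mu2"
      unfolding dual_feasible_def mu2_def using e(2) expand by simp
    then have le: "dual_obj T mu2 \<le> dual_obj T mu" using opt unfolding dual_optimal_def by blast
    have "dual_obj T mu2 \<ge> (\<Sum>t\<in>?I. mu t + e * d t)"
      unfolding dual_obj_def mu2_def by (intro sum_mono) simp
    also have "(\<Sum>t\<in>?I. mu t + e * d t) = Mu + e * (\<Sum>t\<in>?I. d t)"
      unfolding Mu_def by (simp add: sum.distrib sum_distrib_left)
    finally have "dual_obj T mu2 > Mu" using e(1) sd by (smt (verit) mult_pos_pos)
    then show ?thesis using le unfolding dual_obj_def Mu_def by simp
  qed
qed

theorem lemma4:
  fixes S :: "nat \<Rightarrow> nat set" and T :: nat and mu :: "nat \<Rightarrow> real"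
  assumes "tfg S T"
    and "dual_optimal S T mu"
  shows "\<exists>B. B \<subseteq> tight S T mu \<and> card B \<le> T \<and>
           (\<exists>lam. ub_optimal S T lam \<and>
              (\<forall>c\<in>max_orders S T. c \<notin> B \<longrightarrow> (\<forall>t. lam c t = 0)))"
proof -
  let ?M = "max_orders S T"
  let ?K = "tight S T mu"
  let ?I = "{1..T::nat}"
  define v where "v = (\<lambda>c t. if t \<in> set c then mu t else (0::real))"
  have fM: "finite ?M" using finite_max_orders[OF assms(1)] .
  have KM: "?K \<subseteq> ?M" unfolding tight_def by auto
  have fK: "finite ?K" using fM KM finite_subset by blast
  have feas: "dual_feasible S T mu" using assms(2) unfolding dual_optimal_def by blast
  have mu0: "\<forall>t\<in>?I. mu t \<ge> 0" using feas unfolding dual_feasible_def by blast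
  obtain a where a: "\<forall>c\<in>?K. a c \<ge> 0" "\<forall>t\<in>?I. (\<lambda>_. 1::real) t = (\<Sum>c\<in>?K. a c * v c t)"
    using cone[OF assms] unfolding v_def by auto
  from caratheodory[OF finite_atLeastAtMost[of 1 T] fK a]
  obtain B a' where B: "B \<subseteq> ?K" "card B \<le> card ?I" and a': "\<forall>c\<in>B. a' c \<ge> 0"
    "\<forall>t\<in>?I. (1::real) = (\<Sum>c\<in>B. a' c * v c t)" by auto
  have BM: "B \<subseteq> ?M" using B KM by blast
  have fB: "finite B" using fK B finite_subset by blast
  define lam where "lam c t = (if c \<in> B \<and> t \<in> set c then a' c * mu t else 0)" for c t
  have lamv: "lam c t = a' c * v c t" if "c \<in> B" for c t
    using that unfolding lam_def v_def by simp
  have uf: "ub_feasible S T lam"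
    unfolding ub_feasible_def
  proof (intro conjI ballI allI impI)
    fix t assume t: "t \<in> ?I"
    have "(\<Sum>c\<in>?M. lam c t) = (\<Sum>c\<in>B. lam c t)"
      using BM fM by (intro sum.mono_neutral_right) (auto simp: lam_def)
    also have "\<dots> = (\<Sum>c\<in>B. a' c * v c t)" using lamv by simp
    finally show "(\<Sum>c\<in>?M. lam c t) = 1" using a'(2) t by simp
  next
    fix c :: "nat list" and t :: nat assume "t \<notin> set c" then show "lam c t = 0" unfolding lam_def by simp
  next
    fix c t assume c: "c \<in> ?M"
    show "lam c t \<ge> 0"
      using a'(1) mu0 max_orders_set[OF c] unfolding lam_def by auto
  qed
  have tB: "(\<Sum>t\<in>set c. (mu t)\<^sup>2) = 1" if "c \<in> B" for c
    using that B unfolding tight_def by auto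
  have "ub_obj S T lam = (\<Sum>c\<in>B. sqrt (\<Sum>t\<in>set c. (lam c t)\<^sup>2))"
    unfolding ub_obj_def using BM fM by (intro sum.mono_neutral_right) (auto simp: lam_def)
  also have "\<dots> = (\<Sum>c\<in>B. a' c)"
  proof (rule sum.cong[OF refl])
    fix c assume c: "c \<in> B"
    have "(\<Sum>t\<in>set c. (lam c t)\<^sup>2) = (a' c)\<^sup>2 * (\<Sum>t\<in>set c. (mu t)\<^sup>2)"
      unfolding sum_distrib_left using c by (intro sum.cong) (auto simp: lam_def power_mult_distrib)
    then show "sqrt (\<Sum>t\<in>set c. (lam c t)\<^sup>2) = a' c" using tB[OF c] a'(1) c by simp
  qed
  finally have obj: "ub_obj S T lam = (\<Sum>c\<in>B. a' c)" .
  have "dual_obj T mu = (\<Sum>t\<in>?I. mu t * (\<Sum>c\<in>B. a' c * v c t))"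
    unfolding dual_obj_def using a'(2) by simp
  also have "\<dots> = (\<Sum>c\<in>B. a' c * (\<Sum>t\<in>?I. mu t * v c t))"
    unfolding sum_distrib_left by (subst sum.swap) (simp add: algebra_simps)
  also have "\<dots> = (\<Sum>c\<in>B. a' c)"
  proof (rule sum.cong[OF refl])
    fix c assume c: "c \<in> B"
    have "(\<Sum>t\<in>?I. mu t * v c t) = (\<Sum>t\<in>set c. mu t * v c t)"
      using max_orders_set[of c S T] c BM by (intro sum.mono_neutral_right) (auto simp: v_def)
    also have "\<dots> = (\<Sum>t\<in>set c. (mu t)\<^sup>2)" by (intro sum.cong) (auto simp: v_def power2_eq_square)
    finally show "a' c * (\<Sum>t\<in>?I. mu t * v c t) = a' c" using tB[OF c] by simp
  qed
  finally have dobj: "dual_obj T mu = ub_obj S T lam" using obj by simp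
  have "ub_optimal S T lam"
    unfolding ub_optimal_def using uf weak_duality[OF assms(1) feas] dobj by auto
  moreover have "\<forall>c\<in>?M. c \<notin> B \<longrightarrow> (\<forall>t. lam c t = 0)" unfolding lam_def by auto
  ultimately show ?thesis using B by auto
qed

end
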